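(* Let $a, b \in \mathbb{R}$, $m, p \in \mathbb{R}^{+}$ and $k \in \mathbb{N}$. Define $$\mathcal{G}(k,m,a,b,p) = \int_0^\infty x^{k-1} Q_m(a, b\sqrt{x})\, e^{-px}\,{\rm d}x .$$ Then $$\mathcal{G}(k,m,a,b,p) = \frac{\Gamma(k)}{p^k} - \frac{\Gamma(k)\, b^{2m} e^{-\frac{a^2}{2}}}{p^k (b^2+2p)^m}\sum_{l=0}^{k-1}\frac{(m)_l (2p)^l}{l!\,(b^2+2p)^l}\, {}_1F_1\!\left(l+m; m; \frac{a^2b^2}{2b^2+4p}\right).$$
   Context: $Q_m(\alpha,\beta)$ is the generalized Marcum $Q$-function of (real, positive) order $m$, $Q_m(\alpha,\beta) = \alpha^{1-m}\int_\beta^\infty t^{m} e^{-(t^2+\alpha^2)/2} I_{m-1}(\alpha t)\,{\rm d}t$ (with the limiting value for $\alpha=0$), where $I_{\nu}$ is the modified Bessel function of the first kind. $\Gamma$ is the Euler Gamma function, $(x)_n=\Gamma(x+n)/\Gamma(x)$ is the Pochhammer symbol, and ${}_1F_1(\alpha;\gamma;z)=\sum_{l\ge 0}\frac{(\alpha)_l}{(\gamma)_l}\frac{z^l}{l!}$ is the Kummer confluent hypergeometric function. *)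

theory Defs
  imports "HOL-Analysis.Analysis"
begin

definition bessel_I :: "real \<Rightarrow> real \<Rightarrow> real" where
  "bessel_I \<nu> z = (\<Sum>j. (z / 2) powr (2 * real j + \<nu>) / (fact j * Gamma (real j + \<nu> + 1)))"

text \<open>Generalized Marcum Q-function of real positive order m, literal integral for alpha > 0,
  limiting value at alpha = 0. The arguments enter through their absolute values
  (Q_m is defined for alpha, beta >= 0; the paper's formula depends only on a^2, b^2).\<close>
definition marcum_Q_pos :: "real \<Rightarrow> real \<Rightarrow> real \<Rightarrow> real" where
  "marcum_Q_pos m \<alpha> \<beta> =
     \<alpha> powr (1 - m) *
       (LINT t:{\<beta>..}|lborel. t powr m * exp (-(t\<^sup>2 + \<alpha>\<^sup>2) / 2) * bessel_I (m - 1) (\<alpha> * t))"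

definition marcum_Q :: "real \<Rightarrow> real \<Rightarrow> real \<Rightarrow> real" where
  "marcum_Q m \<alpha> \<beta> =
     (if \<alpha> = 0 then Lim (at_right 0) (\<lambda>\<alpha>'. marcum_Q_pos m \<alpha>' \<bar>\<beta>\<bar>)
      else marcum_Q_pos m \<bar>\<alpha>\<bar> \<bar>\<beta>\<bar>)"

definition hyp1F1 :: "real \<Rightarrow> real \<Rightarrow> real \<Rightarrow> real" where
  "hyp1F1 \<alpha> \<gamma> z = (\<Sum>l. pochhammer \<alpha> l / pochhammer \<gamma> l * z ^ l / fact l)"

end

theory Submission
  imports Defs "HOL-Probability.Probability"
begin


definition gam :: "real \<Rightarrow> real \<Rightarrow> real" where
  "gam s u = (if 0 < u then u powr (s - 1) * exp (- u) else 0)"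

lemma gam_nonneg: "gam s u \<ge> 0" by (simp add: gam_def)

lemma gam_meas[measurable]: "gam s \<in> borel_measurable borel"
  unfolding gam_def by measurable

lemma gamma_scaled:
  assumes s: "s > 0" and l: "l > 0"
  shows "(\<integral>\<^sup>+u. ennreal (if 0 < u then u powr (s - 1) * exp (- l * u) else 0) \<partial>lborel)
     = ennreal (Gamma s / l powr s)"
proof -
  let ?f = "\<lambda>u. ennreal (if 0 < u then u powr (s - 1) * exp (- l * u) else 0)"
  have "(\<integral>\<^sup>+u. ?f u \<partial>lborel) = ennreal \<bar>1/l\<bar> * (\<integral>\<^sup>+x. ?f (0 + (1/l) * x) \<partial>lborel)"
    by (rule nn_integral_real_affine) (use l in auto)
  also have "(\<lambda>x. ?f (0 + (1/l) * x)) = (\<lambda>x. ennreal (l powr (1 - s)) * ennreal (indicator {0..} x * x powr (s - 1) / exp x))"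
  proof
    fix x show "?f (0 + (1/l) * x) = ennreal (l powr (1 - s)) * ennreal (indicator {0..} x * x powr (s - 1) / exp x)"
    proof (cases "x > 0")
      case True
      have "(x / l) powr (s - 1) = l powr (1 - s) * x powr (s - 1)"
        using True l by (simp add: powr_divide powr_diff field_simps powr_minus)
      then show ?thesis using True l
        by (simp add: ennreal_mult'[symmetric] exp_minus field_simps)
    next
      case False
      then show ?thesis using l by (cases "x = 0") (auto simp: indicator_def zero_less_divide_iff)
    qed
  qed
  also have "(\<integral>\<^sup>+x. ennreal (l powr (1 - s)) * ennreal (indicator {0..} x * x powr (s - 1) / exp x) \<partial>lborel)
     = ennreal (l powr (1 - s)) * ennreal (Gamma s)"
    by (subst nn_integral_cmult) (auto simp: Gamma_conv_nn_integral_real[OF s])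
  also have "ennreal \<bar>1/l\<bar> * (ennreal (l powr (1 - s)) * ennreal (Gamma s)) = ennreal (Gamma s / l powr s)"
    using l s by (simp add: ennreal_mult'[symmetric] Gamma_real_pos less_imp_le powr_diff field_simps)
  finally show ?thesis .
qed



definition UG :: "real \<Rightarrow> real \<Rightarrow> ennreal" where
  "UG s y = (\<integral>\<^sup>+u. ennreal (gam s u) * indicator {y..} u \<partial>lborel)"

lemma gam_integral: "s > 0 \<Longrightarrow> (\<integral>\<^sup>+u. ennreal (gam s u) \<partial>lborel) = ennreal (Gamma s)"
proof -
  assume s: "s > 0"
  have "(\<lambda>u. ennreal (gam s u)) = (\<lambda>u. ennreal (if 0 < u then u powr (s - 1) * exp (- 1 * u) else 0))"
    by (simp add: gam_def fun_eq_iff)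
  then show ?thesis using gamma_scaled[of s 1] s by simp
qed

lemma UG_le: "s > 0 \<Longrightarrow> UG s y \<le> ennreal (Gamma s)"
  unfolding UG_def gam_integral[symmetric]
  by (intro nn_integral_mono) (auto simp: indicator_def)

lemma UG_nonpos: "s > 0 \<Longrightarrow> y \<le> 0 \<Longrightarrow> UG s y = ennreal (Gamma s)"
  unfolding UG_def gam_integral[symmetric]
  by (intro nn_integral_cong) (auto simp: indicator_def gam_def)

lemma UG_fin: "s > 0 \<Longrightarrow> UG s y \<noteq> \<top>"
  using UG_le[of s y] by (auto simp: top_unique)

lemma UG_meas[measurable]: "(\<lambda>y. UG s y) \<in> borel_measurable borel"
proof -
  have *: "(\<lambda>(y, u). ennreal (gam s u) * indicator {y..} u) \<in> borel_measurable (borel \<Otimes>\<^sub>M lborel)"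
  proof -
    have "(\<lambda>(y::real, u::real). ennreal (gam s u) * indicator {y..} u) = (\<lambda>p. ennreal (gam s (snd p)) * (if fst p \<le> snd p then 1 else 0))"
      by (auto simp: indicator_def fun_eq_iff)
    also have "\<dots> \<in> borel_measurable (borel \<Otimes>\<^sub>M lborel)" by measurable
    finally show ?thesis .
  qed
  show ?thesis unfolding UG_def
    by (rule lborel.borel_measurable_nn_integral) (use * in simp)
qed

lemma ennreal_ind: "ennreal (g * indicator A x) = ennreal g * indicator A x"
  by (simp split: split_indicator)

lemma sq_subst:
  fixes f :: "real \<Rightarrow> real"
  assumes [measurable]: "f \<in> borel_measurable borel"
  shows "(\<integral>\<^sup>+t. ennreal (f (t\<^sup>2/2) * t * indicator {0..} t) \<partial>lborel)
       = (\<integral>\<^sup>+u. ennreal (f u * indicator {0..} u) \<partial>lborel)"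
proof -
  have sub: "(\<integral>\<^sup>+x. ennreal (f x * indicator {0..(real n)\<^sup>2/2} x) \<partial>lborel)
      = (\<integral>\<^sup>+t. ennreal (f (t\<^sup>2/2) * t * indicator {0..real n} t) \<partial>lborel)" for n :: nat
  proof -
    have "(\<integral>\<^sup>+x. ennreal (f x * indicator {(\<lambda>t. t\<^sup>2/2) 0..(\<lambda>t. t\<^sup>2/2) (real n)} x) \<partial>lborel)
      = (\<integral>\<^sup>+t. ennreal (f ((\<lambda>t. t\<^sup>2/2) t) * (\<lambda>t. t) t * indicator {0..real n} t) \<partial>lborel)"
      by (rule nn_integral_substitution) (auto simp: set_borel_measurable_def intro!: derivative_eq_intros continuous_intros)
    then show ?thesis by simp
  qed
  have inc1: "incseq (\<lambda>n x. ennreal (f x) * indicator {0..(real n)\<^sup>2/2} x)"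
  proof -
    have "(real m)\<^sup>2 \<le> (real n)\<^sup>2" if "m \<le> n" for m n using that by (simp add: power_mono)
    then show ?thesis unfolding incseq_def le_fun_def
    proof (intro allI impI mult_left_mono)
      fix m n :: nat and x :: real assume H: "\<And>m n. m \<le> n \<Longrightarrow> (real m)\<^sup>2 \<le> (real n)\<^sup>2" "m \<le> n"
      then have "(real m)\<^sup>2 \<le> (real n)\<^sup>2" by blast
      then have "x * 2 \<le> (real m)\<^sup>2 \<Longrightarrow> x * 2 \<le> (real n)\<^sup>2" by linarith
      then show "indicator {0..(real m)\<^sup>2 / 2} x \<le> (indicator {0..(real n)\<^sup>2 / 2} x :: ennreal)"
        by (auto simp: indicator_def)
    qed auto
  qed
  have inc2: "incseq (\<lambda>n t. ennreal (f (t\<^sup>2/2) * t) * indicator {0..real n} t)"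
    by (auto simp: incseq_def le_fun_def indicator_def)
  have sup1: "(SUP n. ennreal (f x) * indicator {0..(real n)\<^sup>2/2} x) = ennreal (f x) * indicator {0..} x" for x :: real
  proof (cases "x \<ge> 0")
    case True
    define N where "N = nat \<lceil>x\<rceil> + 2"
    have "x \<le> real N" unfolding N_def by linarith
    also have "real N \<le> (real N)\<^sup>2/2"
    proof -
      have "real N * 2 \<le> real N * real N" by (rule mult_left_mono) (auto simp: N_def)
      then show ?thesis by (simp add: power2_eq_square)
    qed
    finally have "ennreal (f x) * indicator {0..(real N)\<^sup>2/2} x = ennreal (f x)" using True by simp
    then have "ennreal (f x) \<le> (SUP n. ennreal (f x) * indicator {0..(real n)\<^sup>2/2} x)"
      by (metis (no_types, lifting) SUP_upper UNIV_I)
    moreover have "(SUP n. ennreal (f x) * indicator {0..(real n)\<^sup>2/2} x) \<le> ennreal (f x)"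
      by (intro SUP_least) (auto simp: indicator_def)
    ultimately show ?thesis using True by (simp add: antisym)
  qed simp
  have sup2: "(SUP n. ennreal (f (t\<^sup>2/2) * t) * indicator {0..real n} t) = ennreal (f (t\<^sup>2/2) * t) * indicator {0..} t" for t :: real
  proof (cases "t \<ge> 0")
    case True
    define N where "N = nat \<lceil>t\<rceil>"
    have "t \<le> real N" unfolding N_def by linarith
    then have "ennreal (f (t\<^sup>2/2) * t) * indicator {0..real N} t = ennreal (f (t\<^sup>2/2) * t)" using True by simp
    then have "ennreal (f (t\<^sup>2/2) * t) \<le> (SUP n. ennreal (f (t\<^sup>2/2) * t) * indicator {0..real n} t)"
      by (metis (no_types, lifting) SUP_upper UNIV_I)
    moreover have "(SUP n. ennreal (f (t\<^sup>2/2) * t) * indicator {0..real n} t) \<le> ennreal (f (t\<^sup>2/2) * t)"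
      by (intro SUP_least) (auto simp: indicator_def)
    ultimately show ?thesis using True by (simp add: antisym)
  qed simp
  have "(\<integral>\<^sup>+u. ennreal (f u * indicator {0..} u) \<partial>lborel) = (\<integral>\<^sup>+u. (SUP n. ennreal (f u) * indicator {0..(real n)\<^sup>2/2} u) \<partial>lborel)"
    by (intro nn_integral_cong) (simp add: sup1 ennreal_ind)
  also have "\<dots> = (SUP n. \<integral>\<^sup>+u. ennreal (f u) * indicator {0..(real n)\<^sup>2/2} u \<partial>lborel)"
    by (rule nn_integral_monotone_convergence_SUP[OF inc1]) measurable
  also have "\<dots> = (SUP n. \<integral>\<^sup>+t. ennreal (f (t\<^sup>2/2) * t) * indicator {0..real n} t \<partial>lborel)"
    using sub by (simp add: ennreal_ind)
  also have "\<dots> = (\<integral>\<^sup>+t. (SUP n. ennreal (f (t\<^sup>2/2) * t) * indicator {0..real n} t) \<partial>lborel)"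
    by (rule nn_integral_monotone_convergence_SUP[OF inc2, symmetric]) measurable
  also have "\<dots> = (\<integral>\<^sup>+t. ennreal (f (t\<^sup>2/2) * t * indicator {0..} t) \<partial>lborel)"
    by (intro nn_integral_cong) (simp add: sup2 ennreal_ind)
  finally show ?thesis ..
qed



lemma pow_aux:
  fixes t n :: real
  assumes t: "t > 0"
  shows "2 powr (n - 1) * ((t\<^sup>2/2) powr (n - 1) * exp (- (t\<^sup>2/2))) * t = t powr (2*n - 1) * exp (- t\<^sup>2/2)"
proof -
  have "(t\<^sup>2/2) powr (n - 1) = t powr (2*(n-1)) / 2 powr (n - 1)"
  proof -
    have "t\<^sup>2 = t powr 2" using t by (simp add: powr_realpow)
    then have "(t\<^sup>2) powr (n - 1) = t powr (2*(n-1))" by (simp add: powr_powr)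
    moreover have "(t\<^sup>2/2) powr (n - 1) = (t\<^sup>2) powr (n - 1) / 2 powr (n - 1)"
      by (rule powr_divide)
    ultimately show ?thesis by simp
  qed
  moreover have "t powr (2*(n-1)) * t = t powr (2*n - 1)"
  proof -
    have "t powr (2*(n-1)) * t = t powr (2*(n-1)) * t powr 1" using t by simp
    also have "\<dots> = t powr (2*(n-1) + 1)" by (rule powr_add[symmetric])
    also have "2*(n-1) + 1 = 2*n - 1" by simp
    finally show ?thesis .
  qed
  ultimately show ?thesis by (simp add: field_simps)
qed

lemma T_UG:
  assumes n: "n > 0" and b: "\<beta> \<ge> 0"
  shows "(\<integral>\<^sup>+t. ennreal (t powr (2*n - 1) * exp (- t\<^sup>2/2)) * indicator {\<beta>..} t \<partial>lborel)
       = ennreal (2 powr (n - 1)) * UG n (\<beta>\<^sup>2/2)"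
proof -
  define f where "f u = 2 powr (n - 1) * gam n u * indicator {\<beta>\<^sup>2/2..} u" for u
  have [measurable]: "f \<in> borel_measurable borel" unfolding f_def by measurable
  have "(\<integral>\<^sup>+t. ennreal (t powr (2*n - 1) * exp (- t\<^sup>2/2)) * indicator {\<beta>..} t \<partial>lborel)
      = (\<integral>\<^sup>+t. ennreal (f (t\<^sup>2/2) * t * indicator {0..} t) \<partial>lborel)"
  proof (intro nn_integral_cong)
    fix t :: real
    show "ennreal (t powr (2*n - 1) * exp (- t\<^sup>2/2)) * indicator {\<beta>..} t = ennreal (f (t\<^sup>2/2) * t * indicator {0..} t)"
    proof (cases "t > 0")
      case True
      have iff: "\<beta> \<le> t \<longleftrightarrow> \<beta>\<^sup>2/2 \<le> t\<^sup>2/2" using True b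
        by (simp add: power2_le_iff_abs_le)
      have pos: "t\<^sup>2/2 > 0" using True by simp
      have fe: "f (t\<^sup>2/2) = 2 powr (n - 1) * ((t\<^sup>2/2) powr (n - 1) * exp (- (t\<^sup>2/2))) * indicator {\<beta>\<^sup>2/2..} (t\<^sup>2/2)"
        unfolding f_def gam_def using pos by (simp only: if_True)
      have "f (t\<^sup>2/2) * t * indicator {0..} t = (if \<beta> \<le> t then t powr (2*n - 1) * exp (- t\<^sup>2/2) else 0)"
      proof (cases "\<beta> \<le> t")
        case True2: True
        then show ?thesis unfolding fe using pow_aux[OF True, of n] True iff by simp
      next
        case False
        then show ?thesis unfolding fe using iff by simp
      qed
      then show ?thesis by (simp add: indicator_def)
    next
      case False
      show ?thesis
      proof (cases "t = 0")
        case True then show ?thesis by simp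
      next
        case F2: False
        then have "t < 0" using False by simp
        then have "\<not> \<beta> \<le> t" using b by simp
        then show ?thesis using \<open>t < 0\<close> by (simp add: indicator_def)
      qed
    qed
  qed
  also have "\<dots> = (\<integral>\<^sup>+u. ennreal (f u * indicator {0..} u) \<partial>lborel)" by (rule sq_subst) measurable
  also have "\<dots> = (\<integral>\<^sup>+u. ennreal (2 powr (n - 1)) * (ennreal (gam n u) * indicator {\<beta>\<^sup>2/2..} u) \<partial>lborel)"
  proof (intro nn_integral_cong)
    fix u :: real
    have "0 \<le> \<beta>\<^sup>2/2" by simp
    then show "ennreal (f u * indicator {0..} u) = ennreal (2 powr (n - 1)) * (ennreal (gam n u) * indicator {\<beta>\<^sup>2/2..} u)"
      unfolding f_def by (cases "\<beta>\<^sup>2/2 \<le> u") (auto simp: indicator_def ennreal_mult' gam_nonneg gam_def)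
  qed
  also have "\<dots> = ennreal (2 powr (n - 1)) * UG n (\<beta>\<^sup>2/2)"
    unfolding UG_def by (rule nn_integral_cmult) measurable
  finally show ?thesis .
qed



definition DD :: "real \<Rightarrow> real \<Rightarrow> nat \<Rightarrow> real" where
  "DD m \<alpha> j = exp (- \<alpha>\<^sup>2/2) * (\<alpha>\<^sup>2/2)^j / (fact j * Gamma (real j + m))"

lemma term_eq:
  fixes \<alpha> t m :: real
  assumes a: "\<alpha> > 0" and t: "t > 0"
  shows "\<alpha> powr (1-m) * (t powr m * exp (-(t\<^sup>2+\<alpha>\<^sup>2)/2) * ((\<alpha>*t/2) powr (2*real j + (m-1)) / (fact j * Gamma (real j + (m-1) + 1))))
    = DD m \<alpha> j / 2 powr (real j + m - 1) * (t powr (2*(real j + m) - 1) * exp (- t\<^sup>2/2))"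
proof -
  have G: "Gamma (real j + (m-1) + 1) = Gamma (real j + m)" by (simp add: algebra_simps)
  have L: "\<alpha> powr (1-m) = exp ((1-m) * ln \<alpha>)" "t powr m = exp (m * ln t)"
     "(\<alpha>*t/2) powr (2*real j + (m-1)) = exp ((2*real j + (m-1)) * (ln \<alpha> + ln t - ln 2))"
     "2 powr (real j + m - 1) = exp ((real j + m - 1) * ln 2)"
     "t powr (2*(real j + m) - 1) = exp ((2*(real j + m) - 1) * ln t)"
    using a t by (simp_all add: powr_def ln_mult ln_div)
  have p: "(\<alpha>\<^sup>2/2)^j = exp (real j * (2 * ln \<alpha> - ln 2))"
  proof -
    have "exp (2 * ln \<alpha>) = \<alpha> powr 2" using a by (simp add: powr_def)
    also have "\<dots> = \<alpha>\<^sup>2" using a by (simp add: powr_realpow)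
    finally have "\<alpha>\<^sup>2/2 = exp (2 * ln \<alpha> - ln 2)" by (simp add: exp_diff)
    then show ?thesis by (simp add: exp_of_nat_mult)
  qed
  have LL: "\<alpha> powr (1-m) * (t powr m * exp (-(t\<^sup>2+\<alpha>\<^sup>2)/2) * ((\<alpha>*t/2) powr (2*real j + (m-1)) / (fact j * Gamma (real j + (m-1) + 1))))
     = exp ((1-m) * ln \<alpha> + m * ln t + (-(t\<^sup>2+\<alpha>\<^sup>2)/2) + (2*real j + (m-1)) * (ln \<alpha> + ln t - ln 2)) / (fact j * Gamma (real j + m))"
    unfolding L G by (simp add: exp_add)
  have RR0: "DD m \<alpha> j / 2 powr (real j + m - 1) * (t powr (2*(real j + m) - 1) * exp (- t\<^sup>2/2))
     = exp (- \<alpha>\<^sup>2/2) * exp (real j * (2 * ln \<alpha> - ln 2)) * exp ((2*(real j + m) - 1) * ln t) * exp (- t\<^sup>2/2) / (exp ((real j + m - 1) * ln 2) * (fact j * Gamma (real j + m)))"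
    unfolding L DD_def p by (simp add: mult_ac)
  have EX: "exp (- \<alpha>\<^sup>2/2) * exp (real j * (2 * ln \<alpha> - ln 2)) * exp ((2*(real j + m) - 1) * ln t) * exp (- t\<^sup>2/2)
     = exp (- \<alpha>\<^sup>2/2 + real j * (2 * ln \<alpha> - ln 2) + (2*(real j + m) - 1) * ln t + (- t\<^sup>2/2))"
    by (simp only: exp_add)
  note RR = RR0[unfolded EX]
  have E: "(1-m) * ln \<alpha> + m * ln t + (-(t\<^sup>2+\<alpha>\<^sup>2)/2) + (2*real j + (m-1)) * (ln \<alpha> + ln t - ln 2)
     = (- \<alpha>\<^sup>2/2 + real j * (2 * ln \<alpha> - ln 2) + (2*(real j + m) - 1) * ln t + (- t\<^sup>2/2)) - (real j + m - 1) * ln 2"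
    by (simp add: algebra_simps add_divide_distrib diff_divide_distrib)
  show ?thesis unfolding LL RR E exp_diff by simp
qed



lemma pos_not_nonpos_Int: "(x::real) > 0 \<Longrightarrow> x \<notin> \<int>\<^sub>\<le>\<^sub>0"
  using nonpos_Ints_nonpos by force

lemma bessel_summ:
  assumes z: "z > 0" and nu: "\<nu> > -1"
  shows "summable (\<lambda>j. (z/2) powr (2*real j + \<nu>) / (fact j * Gamma (real j + \<nu> + 1)))"
proof -
  define w where "w = z/2"
  have w: "w > 0" using z by (simp add: w_def)
  define f where "f j = w powr (2*real j + \<nu>) / (fact j * Gamma (real j + \<nu> + 1))" for j
  have fpos: "f j > 0" for j unfolding f_def using w nu
    by (intro divide_pos_pos mult_pos_pos Gamma_real_pos) auto
  have rec: "f (Suc j) = f j * (w\<^sup>2 / ((real j + 1) * (real j + \<nu> + 1)))" for j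
  proof -
    have "w powr (2*real (Suc j) + \<nu>) = w powr (2*real j + \<nu>) * w powr 2"
      by (simp add: powr_add[symmetric] algebra_simps)
    also have "w powr 2 = w\<^sup>2" using w by (simp add: powr_realpow)
    finally have A: "w powr (2*real (Suc j) + \<nu>) = w powr (2*real j + \<nu>) * w\<^sup>2" .
    have "Gamma (real (Suc j) + \<nu> + 1) = Gamma ((real j + \<nu> + 1) + 1)" by (simp add: algebra_simps)
    also have "\<dots> = (real j + \<nu> + 1) * Gamma (real j + \<nu> + 1)"
      by (rule Gamma_plus1) (rule pos_not_nonpos_Int, use nu in simp)
    finally have B: "Gamma (real (Suc j) + \<nu> + 1) = (real j + \<nu> + 1) * Gamma (real j + \<nu> + 1)" .
    show ?thesis unfolding f_def A B by (simp add: field_simps)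
  qed
  define N where "N = nat \<lceil>2 * w\<^sup>2\<rceil> + 1"
  show ?thesis
    unfolding w_def[symmetric] f_def[symmetric]
  proof (rule summable_ratio_test[of "1/2" N])
    fix j assume j: "N \<le> j"
    have j1: "real j \<ge> 1" using j unfolding N_def by linarith
    have j2: "2 * w\<^sup>2 \<le> real j" using j unfolding N_def by linarith
    have "2 * w\<^sup>2 \<le> (real j + 1) * 1" using j2 by simp
    also have "\<dots> \<le> (real j + 1) * (real j + \<nu> + 1)" using j1 nu by (intro mult_left_mono) auto
    finally have le: "2 * w\<^sup>2 \<le> (real j + 1) * (real j + \<nu> + 1)" .
    have pp: "(real j + 1) * (real j + \<nu> + 1) > 0" using j1 nu by (intro mult_pos_pos) auto
    have "w\<^sup>2 / ((real j + 1) * (real j + \<nu> + 1)) \<le> 1/2"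
      using le pp by (simp add: field_simps)
    then have "f j * (w\<^sup>2 / ((real j + 1) * (real j + \<nu> + 1))) \<le> f j * (1/2)"
      using fpos[of j] by (intro mult_left_mono) auto
    then show "norm (f (Suc j)) \<le> 1/2 * norm (f j)"
      using fpos[of j] fpos[of "Suc j"] rec[of j] by (simp only: real_norm_def abs_of_pos)
  qed simp
qed



definition QE :: "real \<Rightarrow> real \<Rightarrow> real \<Rightarrow> ennreal" where
  "QE m \<alpha> y = (\<Sum>j. ennreal (DD m \<alpha> j) * UG (real j + m) y)"

lemma DD_nonneg: "m > 0 \<Longrightarrow> DD m \<alpha> j \<ge> 0"
  unfolding DD_def by (intro divide_nonneg_pos mult_nonneg_nonneg mult_pos_pos Gamma_real_pos) auto

definition cc :: "real \<Rightarrow> real \<Rightarrow> nat \<Rightarrow> real \<Rightarrow> real" where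
  "cc m \<alpha> j t = DD m \<alpha> j / 2 powr (real j + m - 1) * (t powr (2*(real j + m) - 1) * exp (- t\<^sup>2/2))"

lemma cc_nonneg: "m > 0 \<Longrightarrow> cc m \<alpha> j t \<ge> 0"
  unfolding cc_def using DD_nonneg[of m \<alpha> j] by auto

lemma pointwise_A:
  assumes m: "m > 0" and a: "\<alpha> > 0" and t: "t \<ge> 0"
  shows "summable (\<lambda>j. cc m \<alpha> j t)"
    and "\<alpha> powr (1-m) * (t powr m * exp (-(t\<^sup>2+\<alpha>\<^sup>2)/2) * bessel_I (m-1) (\<alpha>*t)) = (\<Sum>j. cc m \<alpha> j t)"
proof -
  have "summable (\<lambda>j. cc m \<alpha> j t) \<and> \<alpha> powr (1-m) * (t powr m * exp (-(t\<^sup>2+\<alpha>\<^sup>2)/2) * bessel_I (m-1) (\<alpha>*t)) = (\<Sum>j. cc m \<alpha> j t)"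
  proof (cases "t = 0")
    case True
    then show ?thesis using m by (simp add: cc_def)
  next
    case False
    then have t: "t > 0" using t by simp
    define b where "b j = (\<alpha>*t/2) powr (2*real j + (m-1)) / (fact j * Gamma (real j + (m-1) + 1))" for j
    have sb: "summable b" unfolding b_def
      by (rule bessel_summ) (use a t m in auto)
    define K where "K = \<alpha> powr (1-m) * (t powr m * exp (-(t\<^sup>2+\<alpha>\<^sup>2)/2))"
    have eq: "K * b j = cc m \<alpha> j t" for j
      unfolding K_def b_def cc_def using term_eq[OF a t, of m j] by (simp add: mult_ac)
    from summable_mult[OF sb, of K] have s1: "summable (\<lambda>j. cc m \<alpha> j t)" unfolding eq .
    have bI: "bessel_I (m-1) (\<alpha>*t) = (\<Sum>j. b j)" unfolding bessel_I_def b_def ..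
    have "\<alpha> powr (1-m) * (t powr m * exp (-(t\<^sup>2+\<alpha>\<^sup>2)/2) * bessel_I (m-1) (\<alpha>*t)) = K * (\<Sum>j. b j)"
      unfolding bI K_def by (simp add: mult_ac)
    also have "\<dots> = (\<Sum>j. K * b j)" by (rule suminf_mult[OF sb, symmetric])
    also have "\<dots> = (\<Sum>j. cc m \<alpha> j t)" unfolding eq ..
    finally show ?thesis using s1 by simp
  qed
  then show "summable (\<lambda>j. cc m \<alpha> j t)"
    and "\<alpha> powr (1-m) * (t powr m * exp (-(t\<^sup>2+\<alpha>\<^sup>2)/2) * bessel_I (m-1) (\<alpha>*t)) = (\<Sum>j. cc m \<alpha> j t)"
    by auto
qed



lemma bessel_meas[measurable]: "(\<lambda>t. bessel_I \<nu> (c * t)) \<in> borel_measurable borel"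
  unfolding bessel_I_def by measurable

lemma cc_meas[measurable]: "cc m \<alpha> j \<in> borel_measurable borel"
  unfolding cc_def by measurable

lemma marcum_pos_eq:
  assumes m: "m > 0" and a: "\<alpha> > 0" and b: "\<beta> \<ge> 0"
  shows "marcum_Q_pos m \<alpha> \<beta> = enn2real (QE m \<alpha> (\<beta>\<^sup>2/2))"
proof -
  define g where "g t = t powr m * exp (-(t\<^sup>2+\<alpha>\<^sup>2)/2) * bessel_I (m-1) (\<alpha>*t)" for t
  have gm[measurable]: "g \<in> borel_measurable borel" unfolding g_def by measurable
  have apos: "\<alpha> powr (1-m) > 0" using a by simp
  have gnn: "g t \<ge> 0" if "t \<ge> 0" for t
  proof -
    have "\<alpha> powr (1-m) * g t \<ge> 0"
      unfolding g_def pointwise_A(2)[OF m a that]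
      by (rule suminf_nonneg[OF pointwise_A(1)[OF m a that]]) (rule cc_nonneg[OF m])
    then show ?thesis using apos by (simp add: zero_le_mult_iff)
  qed
  have "(LINT t:{\<beta>..}|lborel. g t) = enn2real (\<integral>\<^sup>+t. ennreal (indicator {\<beta>..} t *\<^sub>R g t) \<partial>lborel)"
    unfolding set_lebesgue_integral_def
    by (rule integral_eq_nn_integral) (use b gnn in \<open>auto simp: indicator_def\<close>)
  then have "marcum_Q_pos m \<alpha> \<beta> = \<alpha> powr (1-m) * enn2real (\<integral>\<^sup>+t. ennreal (indicator {\<beta>..} t *\<^sub>R g t) \<partial>lborel)"
    unfolding marcum_Q_pos_def g_def by simp
  also have "\<dots> = enn2real (ennreal (\<alpha> powr (1-m)) * (\<integral>\<^sup>+t. ennreal (indicator {\<beta>..} t *\<^sub>R g t) \<partial>lborel))"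
    using apos by (simp add: enn2real_mult)
  also have "ennreal (\<alpha> powr (1-m)) * (\<integral>\<^sup>+t. ennreal (indicator {\<beta>..} t *\<^sub>R g t) \<partial>lborel)
      = (\<integral>\<^sup>+t. ennreal (\<alpha> powr (1-m)) * ennreal (indicator {\<beta>..} t *\<^sub>R g t) \<partial>lborel)"
    by (rule nn_integral_cmult[symmetric]) measurable
  also have "\<dots> = (\<integral>\<^sup>+t. (\<Sum>j. ennreal (cc m \<alpha> j t) * indicator {\<beta>..} t) \<partial>lborel)"
  proof (intro nn_integral_cong)
    fix t :: real
    show "ennreal (\<alpha> powr (1-m)) * ennreal (indicator {\<beta>..} t *\<^sub>R g t) = (\<Sum>j. ennreal (cc m \<alpha> j t) * indicator {\<beta>..} t)"
    proof (cases "\<beta> \<le> t")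
      case True
      then have t: "t \<ge> 0" using b by simp
      have "ennreal (\<alpha> powr (1-m)) * ennreal (indicator {\<beta>..} t *\<^sub>R g t) = ennreal (\<alpha> powr (1-m) * g t)"
        using True apos gnn[OF t] by (simp add: ennreal_mult)
      also have "\<dots> = ennreal (\<Sum>j. cc m \<alpha> j t)" unfolding g_def pointwise_A(2)[OF m a t] ..
      also have "\<dots> = (\<Sum>j. ennreal (cc m \<alpha> j t))"
        by (rule suminf_ennreal2[symmetric]) (use cc_nonneg[OF m] pointwise_A(1)[OF m a t] in auto)
      finally show ?thesis using True by simp
    qed simp
  qed
  also have "\<dots> = (\<Sum>j. \<integral>\<^sup>+t. ennreal (cc m \<alpha> j t) * indicator {\<beta>..} t \<partial>lborel)"
    by (rule nn_integral_suminf) measurable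
  also have "\<dots> = (\<Sum>j. ennreal (DD m \<alpha> j) * UG (real j + m) (\<beta>\<^sup>2/2))"
  proof (intro suminf_cong)
    fix j
    have p2: "2 powr (real j + m - 1) > 0" by simp
    have "(\<integral>\<^sup>+t. ennreal (cc m \<alpha> j t) * indicator {\<beta>..} t \<partial>lborel)
       = (\<integral>\<^sup>+t. ennreal (DD m \<alpha> j / 2 powr (real j + m - 1)) * (ennreal (t powr (2*(real j + m) - 1) * exp (- t\<^sup>2/2)) * indicator {\<beta>..} t) \<partial>lborel)"
    proof -
      have nn: "0 \<le> DD m \<alpha> j / 2 powr (real j + m - 1)" using DD_nonneg[OF m, of \<alpha> j] p2 by simp
      show ?thesis unfolding cc_def by (intro nn_integral_cong) (simp only: ennreal_mult'[OF nn] mult.assoc)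
    qed
    also have "\<dots> = ennreal (DD m \<alpha> j / 2 powr (real j + m - 1)) * (\<integral>\<^sup>+t. ennreal (t powr (2*(real j + m) - 1) * exp (- t\<^sup>2/2)) * indicator {\<beta>..} t \<partial>lborel)"
      by (rule nn_integral_cmult) measurable
    also have "\<dots> = ennreal (DD m \<alpha> j / 2 powr (real j + m - 1)) * (ennreal (2 powr (real j + m - 1)) * UG (real j + m) (\<beta>\<^sup>2/2))"
      using T_UG[of "real j + m" \<beta>] m b by simp
    also have "\<dots> = ennreal (DD m \<alpha> j) * UG (real j + m) (\<beta>\<^sup>2/2)"
      using DD_nonneg[OF m, of \<alpha> j] p2 by (simp add: mult.assoc[symmetric] ennreal_mult[symmetric])
    finally show "(\<integral>\<^sup>+t. ennreal (cc m \<alpha> j t) * indicator {\<beta>..} t \<partial>lborel) = ennreal (DD m \<alpha> j) * UG (real j + m) (\<beta>\<^sup>2/2)" .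
  qed
  finally show ?thesis unfolding QE_def .
qed



definition qq :: "real \<Rightarrow> real \<Rightarrow> nat \<Rightarrow> real" where
  "qq m y j = enn2real (UG (real j + m) y) / Gamma (real j + m)"

lemma qq_bounds: assumes m: "m > 0" shows "0 \<le> qq m y j" "qq m y j \<le> 1"
proof -
  have g: "Gamma (real j + m) > 0" using m by (intro Gamma_real_pos) auto
  have "enn2real (UG (real j + m) y) \<le> Gamma (real j + m)"
    using UG_le[of "real j + m" y] m g by (simp add: enn2real_leI)
  then show "0 \<le> qq m y j" "qq m y j \<le> 1" using g by (auto simp: qq_def)
qed

lemma DD_UG: assumes m: "m > 0"
  shows "ennreal (DD m \<alpha> j) * UG (real j + m) y = ennreal (exp (- \<alpha>\<^sup>2/2) * ((\<alpha>\<^sup>2/2)^j / fact j * qq m y j))"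
proof -
  have g: "Gamma (real j + m) > 0" using m by (intro Gamma_real_pos) auto
  have "UG (real j + m) y = ennreal (enn2real (UG (real j + m) y))"
    using UG_fin[of "real j + m" y] m by (simp add: ennreal_enn2real_if)
  then have "ennreal (DD m \<alpha> j) * UG (real j + m) y = ennreal (DD m \<alpha> j * enn2real (UG (real j + m) y))"
    by (simp add: ennreal_mult'[OF DD_nonneg[OF m]])
  also have "DD m \<alpha> j * enn2real (UG (real j + m) y) = exp (- \<alpha>\<^sup>2/2) * ((\<alpha>\<^sup>2/2)^j / fact j * qq m y j)"
    unfolding DD_def qq_def using g by (simp add: field_simps)
  finally show ?thesis .
qed

lemma le_aux: "(0::real) \<le> x \<Longrightarrow> q \<le> 1 \<Longrightarrow> 0 < f \<Longrightarrow> x * q / f \<le> x / f"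
  by (intro divide_right_mono mult_left_le) auto

lemma exp_series_summ: "summable (\<lambda>j. x^j / fact j :: real)"
  using summable_exp_generic[of x] by (simp add: divide_inverse mult.commute scaleR_conv_of_real)

lemma exp_series_sum: "(\<Sum>j. x^j / fact j :: real) = exp x"
  by (simp add: exp_def divide_inverse mult.commute scaleR_conv_of_real)

lemma qq_summ: assumes m: "m > 0" and c: "c \<ge> 0"
  shows "summable (\<lambda>j. c^j / fact j * qq m y j)"
proof (rule summable_comparison_test'[OF exp_series_summ[of c]])
  fix j :: nat
  show "norm (c^j / fact j * qq m y j) \<le> c^j / fact j"
    using qq_bounds[OF m, of y j] c le_aux[of "c^j" "qq m y j" "fact j"] by (simp add: abs_mult)
qed

lemma QE_real:
  assumes m: "m > 0"
  shows "QE m \<alpha> y = ennreal (exp (- \<alpha>\<^sup>2/2) * (\<Sum>j. (\<alpha>\<^sup>2/2)^j / fact j * qq m y j))"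
    and "enn2real (QE m \<alpha> y) = exp (- \<alpha>\<^sup>2/2) * (\<Sum>j. (\<alpha>\<^sup>2/2)^j / fact j * qq m y j)"
proof -
  have s: "summable (\<lambda>j. (\<alpha>\<^sup>2/2)^j / fact j * qq m y j)" by (rule qq_summ[OF m]) simp
  have nn: "0 \<le> (\<Sum>j. (\<alpha>\<^sup>2/2)^j / fact j * qq m y j)"
    by (rule suminf_nonneg[OF s]) (use qq_bounds[OF m] in simp)
  have "QE m \<alpha> y = (\<Sum>j. ennreal (exp (- \<alpha>\<^sup>2/2) * ((\<alpha>\<^sup>2/2)^j / fact j * qq m y j)))"
    unfolding QE_def DD_UG[OF m] ..
  also have "\<dots> = ennreal (\<Sum>j. exp (- \<alpha>\<^sup>2/2) * ((\<alpha>\<^sup>2/2)^j / fact j * qq m y j))"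
    by (rule suminf_ennreal2) (use summable_mult[OF s] qq_bounds[OF m] in auto)
  also have "(\<Sum>j. exp (- \<alpha>\<^sup>2/2) * ((\<alpha>\<^sup>2/2)^j / fact j * qq m y j)) = exp (- \<alpha>\<^sup>2/2) * (\<Sum>j. (\<alpha>\<^sup>2/2)^j / fact j * qq m y j)"
    by (rule suminf_mult[OF s])
  finally show 1: "QE m \<alpha> y = ennreal (exp (- \<alpha>\<^sup>2/2) * (\<Sum>j. (\<alpha>\<^sup>2/2)^j / fact j * qq m y j))" .
  show "enn2real (QE m \<alpha> y) = exp (- \<alpha>\<^sup>2/2) * (\<Sum>j. (\<alpha>\<^sup>2/2)^j / fact j * qq m y j)"
    unfolding 1 using nn by simp
qed

lemma QE_le1: assumes m: "m > 0" shows "QE m \<alpha> y \<le> 1"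
proof -
  have s: "summable (\<lambda>j. (\<alpha>\<^sup>2/2)^j / fact j * qq m y j)" by (rule qq_summ[OF m]) simp
  have "(\<Sum>j. (\<alpha>\<^sup>2/2)^j / fact j * qq m y j) \<le> (\<Sum>j. (\<alpha>\<^sup>2/2)^j / fact j)"
    by (rule suminf_le[OF _ s exp_series_summ]) (use qq_bounds[OF m] le_aux in \<open>auto\<close>)
  also have "\<dots> = exp (\<alpha>\<^sup>2/2)" by (rule exp_series_sum)
  finally have "exp (- \<alpha>\<^sup>2/2) * (\<Sum>j. (\<alpha>\<^sup>2/2)^j / fact j * qq m y j) \<le> exp (- \<alpha>\<^sup>2/2) * exp (\<alpha>\<^sup>2/2)"
    by (intro mult_left_mono) auto
  also have "\<dots> = 1" by (simp add: exp_minus field_simps)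
  finally show ?thesis unfolding QE_real(1)[OF m] by simp
qed

lemma QE_fin: "m > 0 \<Longrightarrow> QE m \<alpha> y \<noteq> \<top>"
  using QE_le1[of m \<alpha> y] by (auto simp: top_unique)

lemma QE_nonpos: assumes m: "m > 0" and y: "y \<le> 0" shows "QE m \<alpha> y = 1"
proof -
  have q1: "qq m y j = 1" for j
  proof -
    have "Gamma (real j + m) > 0" using m by (intro Gamma_real_pos) auto
    then have "Gamma (real j + m) \<noteq> 0" by linarith
    then show ?thesis using UG_nonpos[of "real j + m" y] m y by (simp add: qq_def)
  qed
  show ?thesis unfolding QE_real(1)[OF m] q1 mult_1_right exp_series_sum by (simp add: exp_minus)
qed



definition hh :: "real \<Rightarrow> real \<Rightarrow> real \<Rightarrow> real" where
  "hh m y c = (\<Sum>j. (qq m y j / fact j) * c^j)"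

lemma hh_cont: assumes m: "m > 0" shows "isCont (hh m y) x"
proof -
  have s: "summable (\<lambda>j. (qq m y j / fact j) * (\<bar>x\<bar>+1)^j)"
  proof (rule summable_comparison_test'[OF exp_series_summ[of "\<bar>x\<bar>+1"]])
    fix j :: nat
    show "norm (qq m y j / fact j * (\<bar>x\<bar>+1)^j) \<le> (\<bar>x\<bar>+1)^j / fact j"
      using qq_bounds[OF m, of y j] le_aux[of "(\<bar>x\<bar>+1)^j" "qq m y j" "fact j"]
      by (simp add: abs_mult mult.commute)
  qed
  show ?thesis unfolding hh_def[abs_def]
    by (rule isCont_powser[OF s]) simp
qed

lemma QE_hh: assumes m: "m > 0" shows "enn2real (QE m \<alpha> y) = exp (- \<alpha>\<^sup>2/2) * hh m y (\<alpha>\<^sup>2/2)"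
  unfolding QE_real(2)[OF m] hh_def by (simp add: mult_ac)

lemma marcum_Q_eq:
  assumes m: "m > 0"
  shows "marcum_Q m a \<beta> = enn2real (QE m \<bar>a\<bar> (\<beta>\<^sup>2/2))"
proof (cases "a = 0")
  case False
  then have "marcum_Q m a \<beta> = marcum_Q_pos m \<bar>a\<bar> \<bar>\<beta>\<bar>" by (simp add: marcum_Q_def)
  also have "\<dots> = enn2real (QE m \<bar>a\<bar> (\<bar>\<beta>\<bar>\<^sup>2/2))" by (rule marcum_pos_eq) (use m False in auto)
  finally show ?thesis by simp
next
  case True
  define y where "y = \<beta>\<^sup>2/2"
  define F where "F \<alpha> = exp (- \<alpha>\<^sup>2/2) * hh m y (\<alpha>\<^sup>2/2)" for \<alpha>
  have "isCont (\<lambda>\<alpha>::real. \<alpha>\<^sup>2/2) 0" by (intro continuous_intros) simp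
  from isCont_o2[OF this hh_cont[OF m]] have c1: "isCont (\<lambda>\<alpha>. hh m y (\<alpha>\<^sup>2/2)) 0" .
  have cF: "isCont F 0" unfolding F_def
    by (intro continuous_intros c1) auto
  then have t: "(F \<longlongrightarrow> F 0) (at_right 0)"
    unfolding isCont_def by (rule tendsto_mono[OF at_le, rotated]) simp
  have ev: "eventually (\<lambda>\<alpha>. F \<alpha> = marcum_Q_pos m \<alpha> \<bar>\<beta>\<bar>) (at_right 0)"
  proof (rule eventually_at_right_less[THEN eventually_mono])
    fix \<alpha> :: real assume "0 < \<alpha>"
    then show "F \<alpha> = marcum_Q_pos m \<alpha> \<bar>\<beta>\<bar>"
      using marcum_pos_eq[OF m, of \<alpha> "\<bar>\<beta>\<bar>"] QE_hh[OF m, of \<alpha> y] by (simp add: F_def y_def)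
  qed
  have "((\<lambda>\<alpha>. marcum_Q_pos m \<alpha> \<bar>\<beta>\<bar>) \<longlongrightarrow> F 0) (at_right 0)"
    by (rule tendsto_cong[THEN iffD1, OF ev t])
  then have "Lim (at_right 0) (\<lambda>\<alpha>. marcum_Q_pos m \<alpha> \<bar>\<beta>\<bar>) = F 0"
    by (rule tendsto_Lim[rotated]) simp
  then show ?thesis using True QE_hh[OF m, of 0 y] by (simp add: marcum_Q_def F_def y_def)
qed



lemma erlang_CDF_meas[measurable]: "erlang_CDF k p \<in> borel_measurable borel"
  unfolding erlang_CDF_def[abs_def] by measurable

lemma inner_erlang:
  assumes p: "p > 0" and k: "k \<ge> 1"
  shows "(\<integral>\<^sup>+x. ennreal (x^(k-1) * exp (- p * x)) * indicator {0<..} x * indicator {..c} x \<partial>lborel)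
     = ennreal (fact (k-1) / p^k) * ennreal (erlang_CDF (k-1) p c)"
proof -
  have "(\<integral>\<^sup>+x. ennreal (x^(k-1) * exp (- p * x)) * indicator {0<..} x * indicator {..c} x \<partial>lborel)
     = (\<integral>\<^sup>+x. ennreal (fact (k-1) / p^k) * (ennreal (erlang_density (k-1) p x) * indicator {..c} x) \<partial>lborel)"
  proof (intro nn_integral_cong_AE eventually_mono[OF AE_lborel_singleton[of 0]])
    fix x :: real assume x: "x \<noteq> 0"
    show "ennreal (x^(k-1) * exp (- p * x)) * indicator {0<..} x * indicator {..c} x
        = ennreal (fact (k-1) / p^k) * (ennreal (erlang_density (k-1) p x) * indicator {..c} x)"
    proof (cases "x > 0")
      case True
      have kk: "Suc (k-1) = k" using k by simp
      have "fact (k-1) / p^k * erlang_density (k-1) p x = x^(k-1) * exp (- p * x)"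
        using True p unfolding erlang_density_def kk by (simp add: field_simps)
      then have "ennreal (x^(k-1) * exp (- p * x)) = ennreal (fact (k-1) / p^k) * ennreal (erlang_density (k-1) p x)"
      proof -
        have nn: "0 \<le> fact (k-1) / p^k" using p by simp
        show ?thesis using \<open>fact (k-1) / p^k * erlang_density (k-1) p x = x^(k-1) * exp (- p * x)\<close>
          ennreal_mult'[OF nn, of "erlang_density (k-1) p x"] by simp
      qed
      then show ?thesis using True by (simp add: mult.assoc)
    next
      case False
      then have "x < 0" using x by simp
      then show ?thesis by (simp add: erlang_density_def)
    qed
  qed
  also have "\<dots> = ennreal (fact (k-1) / p^k) * (\<integral>\<^sup>+x. ennreal (erlang_density (k-1) p x) * indicator {..c} x \<partial>lborel)"
    by (rule nn_integral_cmult) measurable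
  also have "(\<integral>\<^sup>+x. ennreal (erlang_density (k-1) p x) * indicator {..c} x \<partial>lborel) = ennreal (erlang_CDF (k-1) p c)"
    using nn_integral_erlang_density[OF p, of "k-1" c] by simp
  finally show ?thesis .
qed

lemma tonelli_step:
  assumes p: "p > 0" and k: "k \<ge> 1" and b: "b \<noteq> 0"
  shows "(\<integral>\<^sup>+x. ennreal (x^(k-1) * exp (- p * x)) * indicator {0<..} x * UG n (b\<^sup>2*x/2) \<partial>lborel)
    = ennreal (fact (k-1) / p^k) * (\<integral>\<^sup>+u. ennreal (gam n u) * ennreal (erlang_CDF (k-1) p (2*u/b\<^sup>2)) \<partial>lborel)"
proof -
  have b2: "b\<^sup>2 > 0" using b by simp
  let ?h = "\<lambda>x. ennreal (x^(k-1) * exp (- p * x)) * indicator {0<..} x"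
  have "(\<integral>\<^sup>+x. ?h x * UG n (b\<^sup>2*x/2) \<partial>lborel)
      = (\<integral>\<^sup>+x. (\<integral>\<^sup>+u. ?h x * (ennreal (gam n u) * (if b\<^sup>2*x/2 \<le> u then 1 else 0)) \<partial>lborel) \<partial>lborel)"
  proof (intro nn_integral_cong)
    fix x :: real
    have "UG n (b\<^sup>2*x/2) = (\<integral>\<^sup>+u. ennreal (gam n u) * (if b\<^sup>2*x/2 \<le> u then 1 else 0) \<partial>lborel)"
      unfolding UG_def by (intro nn_integral_cong) (auto simp: indicator_def)
    then show "?h x * UG n (b\<^sup>2*x/2) = (\<integral>\<^sup>+u. ?h x * (ennreal (gam n u) * (if b\<^sup>2*x/2 \<le> u then 1 else 0)) \<partial>lborel)"
      by (simp add: nn_integral_cmult)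
  qed
  also have "\<dots> = (\<integral>\<^sup>+u. (\<integral>\<^sup>+x. ?h x * (ennreal (gam n u) * (if b\<^sup>2*x/2 \<le> u then 1 else 0)) \<partial>lborel) \<partial>lborel)"
    by (rule lborel_pair.Fubini'[symmetric]) measurable
  also have "\<dots> = (\<integral>\<^sup>+u. ennreal (gam n u) * (ennreal (fact (k-1) / p^k) * ennreal (erlang_CDF (k-1) p (2*u/b\<^sup>2))) \<partial>lborel)"
  proof (intro nn_integral_cong)
    fix u :: real
    have "(\<integral>\<^sup>+x. ?h x * (ennreal (gam n u) * (if b\<^sup>2*x/2 \<le> u then 1 else 0)) \<partial>lborel)
       = (\<integral>\<^sup>+x. ennreal (gam n u) * (?h x * indicator {..2*u/b\<^sup>2} x) \<partial>lborel)"
    proof (intro nn_integral_cong)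
      fix x :: real
      have "b\<^sup>2*x/2 \<le> u \<longleftrightarrow> x \<le> 2*u/b\<^sup>2" using b2 by (simp add: field_simps)
      then show "?h x * (ennreal (gam n u) * (if b\<^sup>2*x/2 \<le> u then 1 else 0)) = ennreal (gam n u) * (?h x * indicator {..2*u/b\<^sup>2} x)"
        by (simp add: indicator_def mult_ac)
    qed
    also have "\<dots> = ennreal (gam n u) * (\<integral>\<^sup>+x. ?h x * indicator {..2*u/b\<^sup>2} x \<partial>lborel)"
      by (rule nn_integral_cmult) measurable
    also have "(\<integral>\<^sup>+x. ?h x * indicator {..2*u/b\<^sup>2} x \<partial>lborel) = ennreal (fact (k-1) / p^k) * ennreal (erlang_CDF (k-1) p (2*u/b\<^sup>2))"
      by (rule inner_erlang[OF p k])
    finally show "(\<integral>\<^sup>+x. ?h x * (ennreal (gam n u) * (if b\<^sup>2*x/2 \<le> u then 1 else 0)) \<partial>lborel)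
       = ennreal (gam n u) * (ennreal (fact (k-1) / p^k) * ennreal (erlang_CDF (k-1) p (2*u/b\<^sup>2)))" .
  qed
  also have "\<dots> = ennreal (fact (k-1) / p^k) * (\<integral>\<^sup>+u. ennreal (gam n u) * ennreal (erlang_CDF (k-1) p (2*u/b\<^sup>2)) \<partial>lborel)"
    by (subst nn_integral_cmult[symmetric]) (auto simp: mult_ac)
  finally show ?thesis .
qed



lemma tail_integral:
  assumes n: "n > 0" and q: "q > 0"
  shows "(\<integral>\<^sup>+u. ennreal (gam n u * ((q*u)^l * exp (- (q*u)) / fact l)) \<partial>lborel)
     = ennreal (q^l / fact l * Gamma (n + real l) / (1+q) powr (n + real l))"
proof -
  have "(\<integral>\<^sup>+u. ennreal (gam n u * ((q*u)^l * exp (- (q*u)) / fact l)) \<partial>lborel)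
     = (\<integral>\<^sup>+u. ennreal (q^l / fact l) * ennreal (if 0 < u then u powr (n + real l - 1) * exp (- (1+q) * u) else 0) \<partial>lborel)"
  proof (intro nn_integral_cong)
    fix u :: real
    show "ennreal (gam n u * ((q*u)^l * exp (- (q*u)) / fact l))
       = ennreal (q^l / fact l) * ennreal (if 0 < u then u powr (n + real l - 1) * exp (- (1+q) * u) else 0)"
    proof (cases "u > 0")
      case True
      have "u powr (n + real l - 1) = u powr (n - 1) * u^l"
        using True by (simp add: powr_add[symmetric] powr_realpow[symmetric] algebra_simps)
      moreover have "exp (- (1+q) * u) = exp (-u) * exp (- (q*u))" by (simp add: exp_add[symmetric] algebra_simps)
      ultimately have "gam n u * ((q*u)^l * exp (- (q*u)) / fact l) = q^l / fact l * (u powr (n + real l - 1) * exp (- (1+q) * u))"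
        using True by (simp add: gam_def power_mult_distrib field_simps)
      then show ?thesis using True q by (simp add: ennreal_mult'[symmetric])
    qed (simp add: gam_def)
  qed
  also have "\<dots> = ennreal (q^l / fact l) * ennreal (Gamma (n + real l) / (1+q) powr (n + real l))"
    by (subst nn_integral_cmult) (use gamma_scaled[of "n + real l" "1+q"] n q in auto)
  also have "\<dots> = ennreal (q^l / fact l * Gamma (n + real l) / (1+q) powr (n + real l))"
    using q by (simp add: ennreal_mult'[symmetric])
  finally show ?thesis .
qed



definition VV :: "real \<Rightarrow> real \<Rightarrow> nat \<Rightarrow> real" where
  "VV q n l = q^l / fact l * Gamma (n + real l) / (1+q) powr (n + real l)"

lemma VV_nonneg: "q > 0 \<Longrightarrow> n > 0 \<Longrightarrow> VV q n l \<ge> 0"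
  unfolding VV_def by (intro divide_nonneg_pos mult_nonneg_nonneg divide_nonneg_pos Gamma_real_pos less_imp_le[OF Gamma_real_pos]) auto

lemma gam_CDF:
  assumes n: "n > 0" and p: "p > 0" and k: "k \<ge> 1" and b: "b \<noteq> 0"
  defines "q \<equiv> 2*p/b\<^sup>2"
  shows "(\<integral>\<^sup>+u. ennreal (gam n u) * ennreal (erlang_CDF (k-1) p (2*u/b\<^sup>2)) \<partial>lborel)
     = ennreal (Gamma n - (\<Sum>l<k. VV q n l))"
    and "(\<Sum>l<k. VV q n l) \<le> Gamma n"
proof -
  have q: "q > 0" using p b unfolding q_def by simp
  have ks: "{..k-1} = {..<k}" using k by auto
  define X where "X = (\<integral>\<^sup>+u. ennreal (gam n u) * ennreal (erlang_CDF (k-1) p (2*u/b\<^sup>2)) \<partial>lborel)"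
  have pw: "ennreal (gam n u) = ennreal (gam n u) * ennreal (erlang_CDF (k-1) p (2*u/b\<^sup>2))
       + (\<Sum>l<k. ennreal (gam n u * ((q*u)^l * exp (- (q*u)) / fact l)))" for u
  proof (cases "u > 0")
    case True
    have pu: "p * (2*u/b\<^sup>2) = q*u" unfolding q_def by simp
    have cdf: "erlang_CDF (k-1) p (2*u/b\<^sup>2) = 1 - (\<Sum>l<k. (q*u)^l * exp (- (q*u)) / fact l)"
    proof -
      have nn: "\<not> 2*u/b\<^sup>2 < 0" using True b by (simp add: not_less)
      have pu2: "- p * (2*u/b\<^sup>2) = - (q*u)" unfolding q_def by simp
      show ?thesis unfolding erlang_CDF_def ks using nn by (simp only: if_False pu pu2)
    qed
    have t_nn: "\<And>l. 0 \<le> gam n u * ((q*u)^l * exp (- (q*u)) / fact l)"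
      using True q gam_nonneg[of n u] by simp
    have cdf_nn: "0 \<le> erlang_CDF (k-1) p (2*u/b\<^sup>2)" using p by simp
    have "gam n u = gam n u * erlang_CDF (k-1) p (2*u/b\<^sup>2) + (\<Sum>l<k. gam n u * ((q*u)^l * exp (- (q*u)) / fact l))"
    proof -
      have "(\<Sum>l<k. gam n u * ((q*u)^l * exp (- (q*u)) / fact l)) = gam n u * (\<Sum>l<k. (q*u)^l * exp (- (q*u)) / fact l)"
        by (rule sum_distrib_left[symmetric])
      then show ?thesis unfolding cdf by (simp only: right_diff_distrib mult_1_right)
    qed
    then have "ennreal (gam n u) = ennreal (gam n u * erlang_CDF (k-1) p (2*u/b\<^sup>2) + (\<Sum>l<k. gam n u * ((q*u)^l * exp (- (q*u)) / fact l)))"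
      by (rule arg_cong)
    also have "\<dots> = ennreal (gam n u * erlang_CDF (k-1) p (2*u/b\<^sup>2)) + (\<Sum>l<k. ennreal (gam n u * ((q*u)^l * exp (- (q*u)) / fact l)))"
    proof -
      have a: "0 \<le> gam n u * erlang_CDF (k-1) p (2*u/b\<^sup>2)" using cdf_nn gam_nonneg[of n u] by simp
      have c: "0 \<le> (\<Sum>l<k. gam n u * ((q*u)^l * exp (- (q*u)) / fact l))" by (rule sum_nonneg) (rule t_nn)
      show ?thesis unfolding ennreal_plus[OF a c] using sum_ennreal[of "{..<k}" "\<lambda>l. gam n u * ((q*u)^l * exp (- (q*u)) / fact l)"] t_nn
        by simp
    qed
    also have "ennreal (gam n u * erlang_CDF (k-1) p (2*u/b\<^sup>2)) = ennreal (gam n u) * ennreal (erlang_CDF (k-1) p (2*u/b\<^sup>2))"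
      by (rule ennreal_mult[OF gam_nonneg cdf_nn])
    finally show ?thesis .
  qed (simp add: gam_def)
  have "ennreal (Gamma n) = (\<integral>\<^sup>+u. ennreal (gam n u) \<partial>lborel)" using gam_integral[OF n] by simp
  also have "\<dots> = (\<integral>\<^sup>+u. ennreal (gam n u) * ennreal (erlang_CDF (k-1) p (2*u/b\<^sup>2))
       + (\<Sum>l<k. ennreal (gam n u * ((q*u)^l * exp (- (q*u)) / fact l))) \<partial>lborel)"
    by (intro nn_integral_cong) (rule pw)
  also have "\<dots> = X + (\<integral>\<^sup>+u. (\<Sum>l<k. ennreal (gam n u * ((q*u)^l * exp (- (q*u)) / fact l))) \<partial>lborel)"
    unfolding X_def by (rule nn_integral_add) measurable
  also have "(\<integral>\<^sup>+u. (\<Sum>l<k. ennreal (gam n u * ((q*u)^l * exp (- (q*u)) / fact l))) \<partial>lborel)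
     = (\<Sum>l<k. \<integral>\<^sup>+u. ennreal (gam n u * ((q*u)^l * exp (- (q*u)) / fact l)) \<partial>lborel)"
    by (rule nn_integral_sum) measurable
  also have "\<dots> = (\<Sum>l<k. ennreal (VV q n l))"
    unfolding VV_def using tail_integral[OF n q] by simp
  also have "\<dots> = ennreal (\<Sum>l<k. VV q n l)"
    by (rule sum_ennreal) (use VV_nonneg[OF q n] in auto)
  finally have eq: "ennreal (Gamma n) = X + ennreal (\<Sum>l<k. VV q n l)" .
  have Xfin: "X \<noteq> \<top>"
  proof
    assume "X = \<top>"
    with eq show False by simp
  qed
  then obtain x where x: "X = ennreal x" "x \<ge> 0" by (cases X) auto
  have Snn: "(\<Sum>l<k. VV q n l) \<ge> 0" by (rule sum_nonneg) (use VV_nonneg[OF q n] in auto)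
  have "ennreal (Gamma n) = ennreal (x + (\<Sum>l<k. VV q n l))" using eq x Snn by (simp add: ennreal_plus)
  then have "Gamma n = x + (\<Sum>l<k. VV q n l)"
    using x Snn Gamma_real_pos[OF n] by (subst (asm) ennreal_inj) auto
  then show "(\<integral>\<^sup>+u. ennreal (gam n u) * ennreal (erlang_CDF (k-1) p (2*u/b\<^sup>2)) \<partial>lborel)
     = ennreal (Gamma n - (\<Sum>l<k. VV q n l))" using x unfolding X_def by simp
  show "(\<Sum>l<k. VV q n l) \<le> Gamma n" using \<open>Gamma n = x + _\<close> x by simp
qed



lemma termwise:
  fixes c B p m :: real
  assumes c: "c \<ge> 0" and B: "B > 0" and p: "p > 0" and m: "m > 0"
  defines "q \<equiv> 2*p/B"
  shows "exp (-c) * c^j / (fact j * Gamma (real j + m)) * VV q (real j + m) l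
    = exp (-c) * ((B powr m / (B + 2*p) powr m) * (pochhammer m l * (2*p)^l / (fact l * (B + 2*p)^l)))
      * (pochhammer (real l + m) j / pochhammer m j * (c * B / (B + 2*p))^j / fact j)"
proof -
  have q1: "1 + q = (B + 2*p) / B" unfolding q_def using B by (simp add: field_simps)
  have Gj: "Gamma (real j + m) > 0" using m by (intro Gamma_real_pos) auto
  have G1: "Gamma (real j + m + real l) = pochhammer (real j + m) l * Gamma (real j + m)"
  proof -
    have Gj0: "Gamma (real j + m) \<noteq> 0" using Gj by linarith
    show ?thesis using pochhammer_Gamma[OF pos_not_nonpos_Int, of "real j + m" l] m Gj0 by simp
  qed
  have pj: "pochhammer m j > 0" using m by (rule pochhammer_pos)
  have P2: "pochhammer (real j + m) l * pochhammer m j = pochhammer m l * pochhammer (real l + m) j"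
  proof -
    have "pochhammer m (j + l) = pochhammer m j * pochhammer (m + real j) l" by (rule pochhammer_product')
    moreover have "pochhammer m (l + j) = pochhammer m l * pochhammer (m + real l) j" by (rule pochhammer_product')
    ultimately show ?thesis by (simp add: add.commute mult.commute)
  qed
  have P: "pochhammer (real j + m) l = pochhammer m l * pochhammer (real l + m) j / pochhammer m j"
    using P2 pj by (simp add: field_simps)
  have Bp: "B + 2*p > 0" using B p by simp
  have pw: "(1+q) powr (real j + m + real l) = ((B + 2*p) / B)^j * ((B + 2*p) / B)^l * ((B + 2*p) powr m / B powr m)"
  proof -
    have pos: "(B + 2*p) / B > 0" using B Bp by simp
    have "(1+q) powr (real j + m + real l) = ((B + 2*p) / B) powr real j * ((B + 2*p) / B) powr m * ((B + 2*p) / B) powr real l"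
      unfolding q1 by (simp add: powr_add)
    also have "\<dots> = ((B + 2*p) / B)^j * ((B + 2*p) powr m / B powr m) * ((B + 2*p) / B)^l"
      using pos B Bp by (simp add: powr_realpow powr_divide less_imp_le power_divide)
    finally show ?thesis by (simp add: mult_ac)
  qed
  have Bm: "B powr m > 0" "(B + 2*p) powr m > 0" using B Bp by auto
  show ?thesis
    unfolding VV_def G1 P pw unfolding q_def
    using Gj pj Bm B Bp p
    by (simp add: field_simps power_divide power_mult_distrib)
qed



lemma QE_meas[measurable]: "(\<lambda>x. QE m \<alpha> (f x)) \<in> borel_measurable M" if [measurable]: "f \<in> borel_measurable M"
  unfolding QE_def by measurable

lemma LHS_conv:
  fixes a b m p :: real and k :: nat
  assumes m: "m > 0"
  shows "(LINT x:{0<..}|lborel. x ^ (k - 1) * marcum_Q m a (b * sqrt x) * exp (- p * x))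
    = enn2real (\<integral>\<^sup>+x. ennreal (x^(k-1) * exp (- p * x)) * indicator {0<..} x * QE m \<bar>a\<bar> (b\<^sup>2*x/2) \<partial>lborel)"
proof -
  let ?H = "\<lambda>x. ennreal (x^(k-1) * exp (- p * x)) * indicator {0<..} x * QE m \<bar>a\<bar> (b\<^sup>2*x/2)"
  have Hm: "?H \<in> borel_measurable lborel" by measurable
  have eq: "indicator {0<..} x *\<^sub>R (x ^ (k - 1) * marcum_Q m a (b * sqrt x) * exp (- p * x)) = enn2real (?H x)" for x :: real
  proof (cases "x > 0")
    case True
    have "(b * sqrt x)\<^sup>2 / 2 = b\<^sup>2*x/2" using True by (simp add: power_mult_distrib)
    then have "marcum_Q m a (b * sqrt x) = enn2real (QE m \<bar>a\<bar> (b\<^sup>2*x/2))" using marcum_Q_eq[OF m, of a "b * sqrt x"] by simp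
    then show ?thesis using True by (simp add: enn2real_mult mult_ac)
  qed simp
  have ennH: "ennreal (enn2real (?H x)) = ?H x" for x
    using QE_fin[OF m, of "\<bar>a\<bar>" "b\<^sup>2*x/2"] by (simp add: ennreal_enn2real_if ennreal_mult_eq_top_iff split: split_indicator)
  have "(LINT x:{0<..}|lborel. x ^ (k - 1) * marcum_Q m a (b * sqrt x) * exp (- p * x))
      = integral\<^sup>L lborel (\<lambda>x. enn2real (?H x))"
    unfolding set_lebesgue_integral_def eq ..
  also have "\<dots> = enn2real (\<integral>\<^sup>+x. ennreal (enn2real (?H x)) \<partial>lborel)"
    by (rule integral_eq_nn_integral) (use Hm in auto)
  also have "\<dots> = enn2real (\<integral>\<^sup>+x. ?H x \<partial>lborel)" unfolding ennH ..
  finally show ?thesis .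
qed



lemma Gamma_k: "k \<ge> 1 \<Longrightarrow> Gamma (real k) = fact (k-1)"
  using Gamma_fact[of "k-1"] by (simp add: of_nat_diff)

lemma h_integral:
  assumes p: "p > 0" and k: "k \<ge> 1"
  shows "(\<integral>\<^sup>+x. ennreal (x^(k-1) * exp (- p * x)) * indicator {0<..} x \<partial>lborel) = ennreal (fact (k-1) / p^k)"
proof -
  have "(\<integral>\<^sup>+x. ennreal (x^(k-1) * exp (- p * x)) * indicator {0<..} x \<partial>lborel)
     = (\<integral>\<^sup>+x. ennreal (if 0 < x then x powr (real k - 1) * exp (- p * x) else 0) \<partial>lborel)"
  proof (intro nn_integral_cong)
    fix x :: real
    show "ennreal (x^(k-1) * exp (- p * x)) * indicator {0<..} x = ennreal (if 0 < x then x powr (real k - 1) * exp (- p * x) else 0)"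
    proof (cases "x > 0")
      case True
      have "x powr (real k - 1) = x^(k-1)" using True k by (simp add: powr_realpow[symmetric] of_nat_diff)
      then show ?thesis using True by simp
    qed simp
  qed
  also have "\<dots> = ennreal (Gamma (real k) / p powr real k)" by (rule gamma_scaled) (use p k in auto)
  also have "Gamma (real k) / p powr real k = fact (k-1) / p^k" using p k by (simp add: Gamma_k powr_realpow)
  finally show ?thesis .
qed

lemma H_sum:
  assumes m: "m > 0"
  shows "(\<integral>\<^sup>+x. ennreal (x^(k-1) * exp (- p * x)) * indicator {0<..} x * QE m \<alpha> (b\<^sup>2*x/2) \<partial>lborel)
    = (\<Sum>j. ennreal (DD m \<alpha> j) * (\<integral>\<^sup>+x. ennreal (x^(k-1) * exp (- p * x)) * indicator {0<..} x * UG (real j + m) (b\<^sup>2*x/2) \<partial>lborel))"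
proof -
  let ?h = "\<lambda>x. ennreal (x^(k-1) * exp (- p * x)) * indicator {0<..} x"
  have "(\<integral>\<^sup>+x. ?h x * QE m \<alpha> (b\<^sup>2*x/2) \<partial>lborel) = (\<integral>\<^sup>+x. (\<Sum>j. ennreal (DD m \<alpha> j) * (?h x * UG (real j + m) (b\<^sup>2*x/2))) \<partial>lborel)"
  proof (intro nn_integral_cong)
    fix x
    have "?h x * QE m \<alpha> (b\<^sup>2*x/2) = (\<Sum>j. ?h x * (ennreal (DD m \<alpha> j) * UG (real j + m) (b\<^sup>2*x/2)))"
      unfolding QE_def by (rule ennreal_suminf_cmult[symmetric])
    also have "\<dots> = (\<Sum>j. ennreal (DD m \<alpha> j) * (?h x * UG (real j + m) (b\<^sup>2*x/2)))"
      by (intro suminf_cong) (simp only: mult_ac)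
    finally show "?h x * QE m \<alpha> (b\<^sup>2*x/2) = (\<Sum>j. ennreal (DD m \<alpha> j) * (?h x * UG (real j + m) (b\<^sup>2*x/2)))" .
  qed
  also have "\<dots> = (\<Sum>j. \<integral>\<^sup>+x. ennreal (DD m \<alpha> j) * (?h x * UG (real j + m) (b\<^sup>2*x/2)) \<partial>lborel)"
    by (rule nn_integral_suminf) measurable
  also have "\<dots> = (\<Sum>j. ennreal (DD m \<alpha> j) * (\<integral>\<^sup>+x. ?h x * UG (real j + m) (b\<^sup>2*x/2) \<partial>lborel))"
    by (intro suminf_cong nn_integral_cmult) measurable
  finally show ?thesis .
qed

lemma case_b0:
  assumes m: "m > 0" and p: "p > 0" and k: "k \<ge> 1"
  shows "(\<integral>\<^sup>+x. ennreal (x^(k-1) * exp (- p * x)) * indicator {0<..} x * QE m \<alpha> ((0::real)\<^sup>2*x/2) \<partial>lborel)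
    = ennreal (fact (k-1) / p^k)"
  using h_integral[OF p k] QE_nonpos[OF m, of 0 \<alpha>] by simp



lemma main_b:
  fixes a b m p :: real and k :: nat
  assumes m: "m > 0" and p: "p > 0" and k: "k \<ge> 1" and b: "b \<noteq> 0"
  defines "c \<equiv> a\<^sup>2/2" and "B \<equiv> b\<^sup>2"
  defines "q \<equiv> 2*p/B" and "z \<equiv> c*B/(B + 2*p)" and "fk \<equiv> fact (k-1) / p^k"
  defines "K \<equiv> \<lambda>l. exp (-c) * ((B powr m / (B + 2*p) powr m) * (pochhammer m l * (2*p)^l / (fact l * (B + 2*p)^l)))"
  shows "(\<Sum>j. ennreal (DD m \<bar>a\<bar> j) * (\<integral>\<^sup>+x. ennreal (x^(k-1) * exp (- p * x)) * indicator {0<..} x * UG (real j + m) (b\<^sup>2*x/2) \<partial>lborel))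
     = ennreal (fk - fk * (\<Sum>l<k. K l * hyp1F1 (real l + m) m z))"
    and "fk - fk * (\<Sum>l<k. K l * hyp1F1 (real l + m) m z) \<ge> 0"
proof -
  have c: "c \<ge> 0" unfolding c_def by simp
  have Bp: "B > 0" unfolding B_def using b by simp
  have fk: "fk > 0" unfolding fk_def using p by simp
  define G where "G j = Gamma (real j + m)" for j
  have Gp: "G j > 0" for j unfolding G_def using m by (intro Gamma_real_pos) auto
  define S where "S j = (\<Sum>l<k. VV q (real j + m) l)" for j
  have qd: "q = 2*p/b\<^sup>2" unfolding q_def B_def ..
  have S_le: "S j \<le> G j" and S_nn: "S j \<ge> 0" for j
  proof -
    show "S j \<le> G j" unfolding S_def G_def qd by (rule gam_CDF(2)) (use m p k b in auto)
    have "q > 0" unfolding q_def using p Bp by simp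
    then show "S j \<ge> 0" unfolding S_def by (intro sum_nonneg VV_nonneg) (use m in auto)
  qed
  have DDe: "DD m \<bar>a\<bar> j = exp (-c) * c^j / (fact j * G j)" for j
    unfolding DD_def c_def G_def by simp
  have DDG: "DD m \<bar>a\<bar> j * G j = exp (-c) * c^j / fact j" for j
    unfolding DDe using Gp[of j] by simp
  have DDnn: "DD m \<bar>a\<bar> j \<ge> 0" for j by (rule DD_nonneg[OF m])
  define E where "E j = fk * (DD m \<bar>a\<bar> j * (G j - S j))" for j
  define A where "A j = fk * (exp (-c) * c^j / fact j)" for j
  define B' where "B' j = fk * (DD m \<bar>a\<bar> j * S j)" for j
  have EAB: "E j = A j - B' j" for j unfolding E_def A_def B'_def DDG[symmetric] by (simp add: algebra_simps)
  have sA: "summable A" unfolding A_def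
    using summable_mult[OF summable_mult[OF exp_series_summ[of c], of "exp (-c)"], of fk] by (simp add: mult_ac)
  have B'_le: "0 \<le> B' j \<and> B' j \<le> A j" for j
  proof -
    have "DD m \<bar>a\<bar> j * S j \<le> DD m \<bar>a\<bar> j * G j" using S_le[of j] DDnn[of j] by (rule mult_left_mono)
    then show ?thesis unfolding B'_def A_def DDG[symmetric] using fk DDnn[of j] S_nn[of j] by simp
  qed
  have sB: "summable B'" by (rule summable_comparison_test'[OF sA]) (use B'_le in simp)
  have sE: "summable E" unfolding EAB[abs_def] by (rule summable_diff[OF sA sB])
  have Enn: "E j \<ge> 0" for j unfolding EAB using B'_le[of j] by simp
  have W: "(\<integral>\<^sup>+x. ennreal (x^(k-1) * exp (- p * x)) * indicator {0<..} x * UG (real j + m) (b\<^sup>2*x/2) \<partial>lborel)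
      = ennreal fk * ennreal (G j - S j)" for j
  proof -
    have nj: "real j + m > 0" using m by simp
    show ?thesis unfolding tonelli_step[OF p k b] gam_CDF(1)[OF nj p k b, folded qd] S_def G_def fk_def ..
  qed
  have "(\<Sum>j. ennreal (DD m \<bar>a\<bar> j) * (\<integral>\<^sup>+x. ennreal (x^(k-1) * exp (- p * x)) * indicator {0<..} x * UG (real j + m) (b\<^sup>2*x/2) \<partial>lborel))
     = (\<Sum>j. ennreal (E j))"
  proof (intro suminf_cong)
    fix j
    have "G j - S j \<ge> 0" using S_le[of j] by simp
    then show "ennreal (DD m \<bar>a\<bar> j) * (\<integral>\<^sup>+x. ennreal (x^(k-1) * exp (- p * x)) * indicator {0<..} x * UG (real j + m) (b\<^sup>2*x/2) \<partial>lborel) = ennreal (E j)"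
      unfolding W E_def using fk DDnn[of j] by (simp add: ennreal_mult mult_ac)
  qed
  also have "\<dots> = ennreal (\<Sum>j. E j)" by (rule suminf_ennreal2[OF Enn sE])
  finally have main: "(\<Sum>j. ennreal (DD m \<bar>a\<bar> j) * (\<integral>\<^sup>+x. ennreal (x^(k-1) * exp (- p * x)) * indicator {0<..} x * UG (real j + m) (b\<^sup>2*x/2) \<partial>lborel))
     = ennreal (\<Sum>j. E j)" .
  have sumA: "(\<Sum>j. A j) = fk"
  proof -
    have "(\<Sum>j. A j) = fk * (exp (-c) * (\<Sum>j. c^j / fact j))" unfolding A_def
      using suminf_mult[OF summable_mult[OF exp_series_summ[of c], of "exp (-c)"], of fk]
        suminf_mult[OF exp_series_summ[of c], of "exp (-c)"] by simp
    also have "\<dots> = fk" unfolding exp_series_sum by (simp add: exp_minus)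
    finally show ?thesis .
  qed
  have sumB: "(\<Sum>j. B' j) = fk * (\<Sum>l<k. K l * hyp1F1 (real l + m) m z)"
  proof -
    have qp: "q > 0" unfolding q_def using p Bp by simp
    have sA': "summable (\<lambda>j. A j / fk)" by (rule summable_divide[OF sA])
    have inner: "summable (\<lambda>j. DD m \<bar>a\<bar> j * VV q (real j + m) l) \<and> (\<Sum>j. DD m \<bar>a\<bar> j * VV q (real j + m) l) = K l * hyp1F1 (real l + m) m z"
      if l: "l < k" for l
    proof -
      define ht where "ht j = pochhammer (real l + m) j / pochhammer m j * z^j / fact j" for j
      have Kp: "K l > 0" unfolding K_def using Bp p m
        by (intro mult_pos_pos divide_pos_pos pochhammer_pos) auto
      have tw: "DD m \<bar>a\<bar> j * VV q (real j + m) l = K l * ht j" for j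
        unfolding DDe G_def K_def ht_def q_def z_def using termwise[OF c Bp p m, of j l] by simp
      have s1: "summable (\<lambda>j. DD m \<bar>a\<bar> j * VV q (real j + m) l)"
      proof (rule summable_comparison_test'[OF sA'])
        fix j
        have v1: "0 \<le> VV q (real j + m) l" by (rule VV_nonneg[OF qp]) (use m in simp)
        have "VV q (real j + m) l \<le> S j"
          unfolding S_def by (rule member_le_sum) (use l VV_nonneg[OF qp] m in \<open>auto intro: add_nonneg_pos\<close>)
        then have "DD m \<bar>a\<bar> j * VV q (real j + m) l \<le> DD m \<bar>a\<bar> j * G j"
          using S_le[of j] DDnn[of j] by (intro mult_left_mono) auto
        then show "norm (DD m \<bar>a\<bar> j * VV q (real j + m) l) \<le> A j / fk"
          unfolding A_def DDG[symmetric] using fk DDnn[of j] v1 by simp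
      qed
      have sh: "summable ht"
      proof -
        have "summable (\<lambda>j. (DD m \<bar>a\<bar> j * VV q (real j + m) l) / K l)" by (rule summable_divide[OF s1])
        then show ?thesis unfolding tw using Kp by simp
      qed
      have "(\<Sum>j. DD m \<bar>a\<bar> j * VV q (real j + m) l) = (\<Sum>j. K l * ht j)" unfolding tw ..
      also have "\<dots> = K l * (\<Sum>j. ht j)" by (rule suminf_mult[OF sh])
      also have "(\<Sum>j. ht j) = hyp1F1 (real l + m) m z" unfolding hyp1F1_def ht_def ..
      finally show ?thesis using s1 by simp
    qed
    have B'e: "B' j = fk * (\<Sum>l<k. DD m \<bar>a\<bar> j * VV q (real j + m) l)" for j
      unfolding B'_def S_def by (simp add: sum_distrib_left)
    have ss: "summable (\<lambda>j. \<Sum>l<k. DD m \<bar>a\<bar> j * VV q (real j + m) l)"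
      by (rule summable_sum) (use inner in auto)
    have "(\<Sum>j. B' j) = fk * (\<Sum>j. \<Sum>l<k. DD m \<bar>a\<bar> j * VV q (real j + m) l)"
      unfolding B'e by (rule suminf_mult[OF ss])
    also have "(\<Sum>j. \<Sum>l<k. DD m \<bar>a\<bar> j * VV q (real j + m) l) = (\<Sum>l<k. \<Sum>j. DD m \<bar>a\<bar> j * VV q (real j + m) l)"
      by (rule suminf_sum) (use inner in auto)
    also have "\<dots> = (\<Sum>l<k. K l * hyp1F1 (real l + m) m z)"
      by (rule sum.cong) (use inner in auto)
    finally show ?thesis .
  qed
  have sumE: "(\<Sum>j. E j) = fk - fk * (\<Sum>l<k. K l * hyp1F1 (real l + m) m z)"
    unfolding EAB[abs_def] suminf_diff[OF sA sB, symmetric] sumA sumB ..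
  show "(\<Sum>j. ennreal (DD m \<bar>a\<bar> j) * (\<integral>\<^sup>+x. ennreal (x^(k-1) * exp (- p * x)) * indicator {0<..} x * UG (real j + m) (b\<^sup>2*x/2) \<partial>lborel))
     = ennreal (fk - fk * (\<Sum>l<k. K l * hyp1F1 (real l + m) m z))"
    unfolding main sumE ..
  show "fk - fk * (\<Sum>l<k. K l * hyp1F1 (real l + m) m z) \<ge> 0"
    unfolding sumE[symmetric] by (rule suminf_nonneg[OF sE Enn])
qed



theorem theorem2:
  fixes a b m p :: real and k :: nat
  assumes "m > 0" and "p > 0" and "k \<ge> 1"
  shows "(LINT x:{0<..}|lborel. x ^ (k - 1) * marcum_Q m a (b * sqrt x) * exp (- p * x))
    = Gamma (real k) / p ^ k
      - Gamma (real k) * (b\<^sup>2) powr m * exp (- a\<^sup>2 / 2) / (p ^ k * (b\<^sup>2 + 2 * p) powr m)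
        * (\<Sum>l<k. pochhammer m l * (2 * p) ^ l / (fact l * (b\<^sup>2 + 2 * p) ^ l)
                   * hyp1F1 (real l + m) m (a\<^sup>2 * b\<^sup>2 / (2 * b\<^sup>2 + 4 * p)))"
proof -
  note m = assms(1) and p = assms(2) and k = assms(3)
  have Gk: "Gamma (real k) = fact (k-1)" by (rule Gamma_k[OF k])
  note L = LHS_conv[OF m, of k a b p]
  show ?thesis
  proof (cases "b = 0")
    case True
    have "(LINT x:{0<..}|lborel. x ^ (k - 1) * marcum_Q m a (b * sqrt x) * exp (- p * x)) = fact (k-1) / p^k"
      unfolding L using case_b0[OF m p k, of "\<bar>a\<bar>"] True p by simp
    then show ?thesis using True m Gk by simp
  next
    case False
    define fk where "fk = fact (k-1) / p^k"
    define K where "K = (\<lambda>l. exp (-(a\<^sup>2/2)) * ((b\<^sup>2 powr m / (b\<^sup>2 + 2*p) powr m) * (pochhammer m l * (2*p)^l / (fact l * (b\<^sup>2 + 2*p)^l))))"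
    define z where "z = (a\<^sup>2/2)*b\<^sup>2/(b\<^sup>2 + 2*p)"
    have M: "(LINT x:{0<..}|lborel. x ^ (k - 1) * marcum_Q m a (b * sqrt x) * exp (- p * x))
       = fk - fk * (\<Sum>l<k. K l * hyp1F1 (real l + m) m z)"
    proof -
      have E1: "(\<Sum>j. ennreal (DD m \<bar>a\<bar> j) * (\<integral>\<^sup>+x. ennreal (x^(k-1) * exp (- p * x)) * indicator {0<..} x * UG (real j + m) (b\<^sup>2*x/2) \<partial>lborel))
         = ennreal (fk - fk * (\<Sum>l<k. K l * hyp1F1 (real l + m) m z))"
        using main_b(1)[OF m p k False, where a=a] unfolding fk_def K_def z_def .
      have E2: "fk - fk * (\<Sum>l<k. K l * hyp1F1 (real l + m) m z) \<ge> 0"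
        using main_b(2)[OF m p k False, where a=a] unfolding fk_def K_def z_def .
      show ?thesis unfolding L H_sum[OF m] E1 using E2 by simp
    qed
    have z: "z = a\<^sup>2 * b\<^sup>2 / (2 * b\<^sup>2 + 4 * p)" unfolding z_def by (simp add: field_simps)
    have "fk * (\<Sum>l<k. K l * hyp1F1 (real l + m) m z)
      = Gamma (real k) * (b\<^sup>2) powr m * exp (- a\<^sup>2 / 2) / (p ^ k * (b\<^sup>2 + 2 * p) powr m)
        * (\<Sum>l<k. pochhammer m l * (2 * p) ^ l / (fact l * (b\<^sup>2 + 2 * p) ^ l) * hyp1F1 (real l + m) m z)"
      unfolding sum_distrib_left by (rule sum.cong) (simp_all add: K_def fk_def Gk field_simps)
    then show ?thesis unfolding M z[symmetric] using Gk by (simp add: fk_def)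
  qed
qed

end
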